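(* Let $q=2^n$, let $B$ be a $k$-subset of $\mathrm{GF}(q)$ with $k\ge3$, and let $\mathcal B=\mathrm{GA}_1(q)(B)$. Suppose that $\hat f_B(\mu)=\sum_{x\in\mathrm{GF}(q)}(-1)^{\mathrm{Tr}(x^t+\mu^dx)}$ for all $\mu\in\mathrm{GF}(q)$, where $t,d$ are positive integers with $\gcd(td,q-1)=1$. Then $(\mathrm{GF}(q),\mathcal B)$ is a $3$-design if and only if the number $|\{x\in\mathrm{GF}(q):(u^dx+(1+u)^d)^t+x^t+1=0\}|$ is independent of $u\in\mathrm{GF}(q)\setminus\mathrm{GF}(2)$.
   Context: $\mathrm{Tr}$ is the absolute trace $\mathrm{GF}(2^n)\to\mathrm{GF}(2)$. $f_B$ is the characteristic function of $B$ as a Boolean function, and $\hat f(\mu)=\sum_{x\in\mathrm{GF}(2^n)}(-1)^{f(x)+\mathrm{Tr}(\mu x)}$ is the Walsh transform. $\mathrm{GA}_1(q)$ is the group of permutations $x\mapsto ax+b$ of $\mathrm{GF}(q)$ with $a\ne0$; $\mathrm{GA}_1(q)(B)=\{\pi(B):\pi\in\mathrm{GA}_1(q)\}$. A pair $(\mathcal P,\mathcal B)$ with $\mathcal B$ a set of $k$-subsets of $\mathcal P$ is a $3$-design if every $3$-subset of $\mathcal P$ lies in exactly $\lambda$ members of $\mathcal B$ for some constant $\lambda$. *)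

theory Defs
  imports Main
begin

text \<open>Absolute trace GF(2^n) -> GF(2), as the map x |-> sum_{i<n} x^(2^i);
  its values lie in the prime field {0,1}.\<close>
definition abs_trace :: "nat \<Rightarrow> 'a::field \<Rightarrow> 'a" where
  "abs_trace n x = (\<Sum>i<n. x ^ (2 ^ i))"

text \<open>(-1)^y for y in GF(2) = {0,1}, as an integer.\<close>
definition sgn2 :: "'a::field \<Rightarrow> int" where
  "sgn2 y = (if y = 0 then 1 else -1)"

definition char_fun :: "'a set \<Rightarrow> 'a \<Rightarrow> 'b::field" where
  "char_fun B x = (if x \<in> B then 1 else 0)"

definition walsh :: "nat \<Rightarrow> ('a::{field,finite} \<Rightarrow> 'a) \<Rightarrow> 'a \<Rightarrow> int" where
  "walsh n f \<mu> = (\<Sum>x\<in>UNIV. sgn2 (f x + abs_trace n (\<mu> * x)))"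

definition GA1_orbit :: "'a::field set \<Rightarrow> 'a set set" where
  "GA1_orbit B = {(\<lambda>x. a * x + b) ` B | a b. a \<noteq> 0}"

definition is_3_design :: "'a set \<Rightarrow> 'a set set \<Rightarrow> nat \<Rightarrow> bool" where
  "is_3_design P Bs k \<longleftrightarrow>
     (\<forall>b\<in>Bs. b \<subseteq> P \<and> card b = k) \<and>
     (\<exists>lam. \<forall>T. T \<subseteq> P \<longrightarrow> card T = 3 \<longrightarrow> card {b\<in>Bs. T \<subseteq> b} = lam)"

end

theory Submission
  imports Defs "HOL-Number_Theory.Number_Theory" "HOL-Computational_Algebra.Polynomial"
begin

lemma gf_two_eq_0:
  assumes q: "card (UNIV :: 'a::{field,finite} set) = 2 ^ n"
  shows "(2::'a) = 0"
proof -
  have "CHAR('a) > 0" by (simp add: finite_imp_CHAR_pos)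
  hence pr: "prime CHAR('a)" using prime_CHAR_semidom by blast
  have "CHAR('a) dvd 2 ^ n" using CHAR_dvd_CARD[where 'a='a] q by simp
  hence "CHAR('a) dvd 2" using pr prime_dvd_power by blast
  hence "CHAR('a) = 2" using pr
    by (metis prime_nat_iff two_is_prime_nat not_prime_1)
  hence "of_nat 2 = (0::'a)" by (metis of_nat_CHAR)
  thus ?thesis by simp
qed

context
  fixes n :: nat
  assumes q: "card (UNIV :: 'a::{field,finite} set) = 2 ^ n"
begin

lemma c2_add_self: "(x::'a) + x = 0"
proof -
  have "x + x = 2 * x" by simp
  thus ?thesis using gf_two_eq_0[OF q] by simp
qed

lemma c2_neg: "- (x::'a) = x"
  using c2_add_self[of x] by (simp add: add_eq_0_iff)

lemma c2_minus: "(x::'a) - y = x + y"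
  using c2_neg[of y] by (metis diff_conv_add_uminus)

lemma c2_eq_iff: "((x::'a) + y = 0) = (x = y)"
  by (metis c2_minus eq_iff_diff_eq_0)

lemma c2_sq: "((x::'a) + y) ^ 2 = x ^ 2 + y ^ 2"
proof -
  have "(x + y) ^ 2 = x^2 + y^2 + (x*y + x*y)" by (simp add: power2_eq_square algebra_simps)
  thus ?thesis using c2_add_self by simp
qed

lemma c2_pow2: "((x::'a) + y) ^ (2 ^ i) = x ^ (2^i) + y ^ (2^i)"
proof (induction i)
  case (Suc i)
  have "(x + y) ^ (2 ^ Suc i) = ((x + y) ^ (2 ^ i)) ^ 2"
    by (simp add: power_mult[symmetric] mult.commute)
  also have "\<dots> = (x ^ (2^i)) ^ 2 + (y ^ (2^i)) ^ 2" using Suc c2_sq by simp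
  also have "\<dots> = x ^ (2 ^ Suc i) + y ^ (2 ^ Suc i)"
    by (simp add: power_mult[symmetric] mult.commute)
  finally show ?case .
qed simp

lemma c2_sum_sq: "(\<Sum>i\<in>A. f i :: 'a) ^ 2 = (\<Sum>i\<in>A. f i ^ 2)"
  by (induction A rule: infinite_finite_induct) (auto simp: c2_sq)

lemma card_ge2: "card (UNIV :: 'a set) \<ge> 2"
proof -
  have "{0, 1} \<subseteq> (UNIV :: 'a set)" by simp
  hence "card {0, 1::'a} \<le> card (UNIV :: 'a set)" by (intro card_mono) auto
  thus ?thesis by simp
qed

lemma n_pos: "n \<ge> 1"
  using card_ge2 q by (cases n) auto

lemma pow_card: "(x::'a) ^ card (UNIV :: 'a set) = x"
proof (cases "x = 0")
  case False
  have "x * (\<Prod>y\<in>UNIV-{0}. x * y) = x * x ^ (card (UNIV :: 'a set) - 1) * \<Prod>(UNIV-{0})"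
    by (simp add: prod.distrib mult_ac)
  also have "x * x ^ (card (UNIV :: 'a set) - 1) = x ^ Suc (card (UNIV :: 'a set) - 1)"
    by (subst power_Suc) auto
  also have "Suc (card (UNIV :: 'a set) - 1) = card (UNIV :: 'a set)"
    using finite_UNIV_card_ge_0[where ?'a = 'a] by simp
  also have "(\<Prod>y\<in>UNIV-{0}. x * y) = (\<Prod>y\<in>UNIV-{0}. y)"
    by (rule prod.reindex_bij_witness[of _ "\<lambda>y. y / x" "\<lambda>y. x * y"]) (use False in auto)
  finally show ?thesis
    by simp
qed (use finite_UNIV_card_ge_0[where ?'a = 'a] in auto)

lemma pow_qm1: "(x::'a) \<noteq> 0 \<Longrightarrow> x ^ (2^n - 1) = 1"
proof -
  assume x: "x \<noteq> 0"
  have "x * x ^ (2^n - 1) = x ^ Suc (2^n - 1)" by (simp only: power_Suc)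
  also have "Suc (2^n - 1) = 2^n" by simp
  also have "x ^ (2^n) = x" using pow_card q by simp
  finally show ?thesis using x by simp
qed

lemma trace_add: "abs_trace n ((x::'a) + y) = abs_trace n x + abs_trace n y"
  unfolding abs_trace_def by (simp add: c2_pow2 sum.distrib)

lemma trace_sq: "abs_trace n (x::'a) ^ 2 = abs_trace n x"
proof -
  have "abs_trace n x ^ 2 = (\<Sum>i<n. (x ^ (2^i)) ^ 2)"
    unfolding abs_trace_def by (rule c2_sum_sq)
  also have "\<dots> = (\<Sum>i<n. x ^ (2 ^ Suc i))"
    by (simp add: power_mult[symmetric] mult.commute)
  also have "\<dots> + x ^ (2^0) = (\<Sum>i<Suc n. x ^ (2 ^ i))"
    by (subst sum.lessThan_Suc_shift) simp
  also have "\<dots> = abs_trace n x + x ^ (2^n)" by (simp add: abs_trace_def)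
  also have "x ^ (2^n) = x" using pow_card q by simp
  finally show ?thesis by simp
qed

lemma trace_01: "abs_trace n (x::'a) = 0 \<or> abs_trace n x = 1"
proof -
  have "abs_trace n x * (abs_trace n x - 1) = 0"
    using trace_sq[of x] by (simp add: power2_eq_square algebra_simps)
  thus ?thesis by simp
qed

lemma sgn2_add:
  assumes "a = 0 \<or> a = (1::'a)" "b = 0 \<or> b = (1::'a)"
  shows "sgn2 (a + b) = sgn2 a * sgn2 b"
  using assms c2_add_self[of "1::'a"] by (auto simp: sgn2_def)

lemma trace_nonzero: "\<exists>a::'a. abs_trace n a = 1"
proof -
  define p :: "'a poly" where "p = (\<Sum>i<n. monom 1 (2^i))"
  have ev: "poly p x = abs_trace n x" for x
    by (simp add: p_def abs_trace_def poly_sum poly_monom)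
  have "coeff p 1 = (\<Sum>i<n. if 2^i = (1::nat) then 1 else 0)"
    by (simp add: p_def coeff_sum coeff_monom)
  also have "(\<lambda>i. if 2^i = (1::nat) then (1::'a) else 0) = (\<lambda>i. if i = 0 then 1 else 0)"
    by auto
  also have "(\<Sum>i<n. if i = 0 then (1::'a) else 0) = 1"
    using n_pos by (simp add: sum.delta)
  finally have "coeff p 1 \<noteq> 0" by simp
  hence p0: "p \<noteq> 0" by auto
  have "degree p \<le> 2^(n-1)"
    unfolding p_def
    by (rule degree_sum_le) (auto intro!: order.trans[OF degree_monom_le])
  have "card {x. poly p x = 0} \<le> degree p" by (rule card_poly_roots_bound[OF p0])
  also have "\<dots> < 2^n"
  proof -
    have "(2::nat)^(n-1) < 2^n" using n_pos by (cases n) auto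
    thus ?thesis using \<open>degree p \<le> 2^(n-1)\<close> by linarith
  qed
  finally have "{x. poly p x = 0} \<noteq> UNIV" using q by auto
  then obtain a where "poly p a \<noteq> 0" by blast
  thus ?thesis using trace_01 ev by metis
qed

end

definition chi :: "nat \<Rightarrow> 'a::field \<Rightarrow> int" where
  "chi n x = sgn2 (abs_trace n x)"

context
  fixes n :: nat
  assumes q: "card (UNIV :: 'a::{field,finite} set) = 2 ^ n"
begin

lemma chi_add: "chi n ((x::'a) + y) = chi n x * chi n y"
  unfolding chi_def using q by (simp add: trace_add sgn2_add trace_01)

lemma chi_0: "chi n (0::'a) = 1"
  by (simp add: chi_def abs_trace_def sgn2_def power_0_left)

lemma chi_sq: "chi n (x::'a) * chi n x = 1"
  by (simp add: chi_def sgn2_def)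

lemma sum_affine:
  fixes g :: "'a \<Rightarrow> 'b::comm_monoid_add"
  assumes c: "c \<noteq> 0"
  shows "(\<Sum>x\<in>UNIV. g (c * x + a)) = (\<Sum>x\<in>UNIV. g x)"
  by (rule sum.reindex_bij_witness[of _ "\<lambda>y. (y - a) / c" "\<lambda>x. c * x + a"])
     (use c in \<open>auto simp: field_simps\<close>)

lemma char_sum: "(\<Sum>x\<in>UNIV. chi n (c * (x::'a))) = (if c = 0 then int (2 ^ n) else 0)"
proof (cases "c = 0")
  case True
  thus ?thesis using q by (simp add: chi_0)
next
  case False
  define S where "S = (\<Sum>x\<in>UNIV. chi n (x::'a))"
  have S1: "(\<Sum>x\<in>UNIV. chi n (c * (x::'a))) = S"
    unfolding S_def using sum_affine[OF False, of "chi n" 0] by simp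
  obtain a :: 'a where a: "abs_trace n a = 1" using trace_nonzero q by blast
  have ca: "chi n a = -1" using a q by (simp add: chi_def sgn2_def)
  have "S = (\<Sum>x\<in>UNIV. chi n (1 * x + a))"
    unfolding S_def using sum_affine[of 1 "chi n" a] by simp
  also have "\<dots> = (\<Sum>x\<in>UNIV. chi n (x::'a) * chi n a)" by (simp add: chi_add)
  also have "\<dots> = - S" by (simp add: S_def ca sum_negf)
  finally have "S = 0" by simp
  thus ?thesis using S1 False by simp
qed

lemma pow_inj:
  assumes e: "e > 0" "coprime e (2 ^ n - 1)"
  shows "inj (\<lambda>x::'a. x ^ e)"
proof -
  define N where "N = (2::nat) ^ n - 1"
  have "(2::nat)^n \<ge> 2^1" using n_pos[OF q] by (intro power_increasing) auto
  hence N1: "N \<ge> 1" unfolding N_def by simp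
  obtain a where a: "[e * a = Suc 0] (mod N)" using cong_solve_coprime_nat e unfolding N_def by blast
  define m where "m = e * (a + N)"
  have "[m = e * a] (mod N)" unfolding m_def cong_def by (simp add: algebra_simps)
  hence m1: "[m = 1] (mod N)" using a cong_trans by force
  have "m \<ge> 1" unfolding m_def using e N1 by simp
  then obtain j where j: "m = j * N + 1" using m1 cong_le_nat by blast
  have xm: "x ^ m = x" for x :: 'a
  proof (cases "x = 0")
    case False
    have "x ^ m = (x ^ N) ^ j * x" by (simp add: j power_add power_mult mult.commute)
    thus ?thesis using pow_qm1[OF q False] N_def by simp
  next
    case True thus ?thesis using \<open>m \<ge> 1\<close> by simp
  qed
  show ?thesis
  proof (rule injI)
    fix x y :: 'a assume "x ^ e = y ^ e"
    hence "(x ^ e) ^ (a + N) = (y ^ e) ^ (a + N)" by simp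
    thus "x = y" using xm[of x] xm[of y] by (simp add: m_def power_mult)
  qed
qed

lemma sum_pow:
  fixes g :: "'a \<Rightarrow> 'b::comm_monoid_add"
  assumes e: "e > 0" "coprime e (2 ^ n - 1)"
  shows "(\<Sum>x\<in>UNIV. g (x ^ e)) = (\<Sum>x\<in>UNIV. g x)"
proof -
  have inj: "inj (\<lambda>x::'a. x ^ e)" by (rule pow_inj[OF e])
  hence surj: "(\<lambda>x::'a. x ^ e) ` UNIV = UNIV" using finite_UNIV_inj_surj[OF finite_UNIV inj] by blast
  have "(\<Sum>x\<in>UNIV. g x) = (\<Sum>x\<in>(\<lambda>x::'a. x ^ e) ` UNIV. g x)" by (simp add: surj)
  also have "\<dots> = (\<Sum>x\<in>UNIV. g (x ^ e))" by (simp add: sum.reindex[OF inj])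
  finally show ?thesis by simp
qed

end

definition walshH :: "nat \<Rightarrow> ('a::field \<Rightarrow> int) \<Rightarrow> 'a \<Rightarrow> int" where
  "walshH n H l = (\<Sum>x\<in>UNIV. H x * chi n (l * x))"

lemma swap4:
  "(\<Sum>l\<in>A. \<Sum>z\<in>B. \<Sum>x\<in>C. \<Sum>y\<in>D. f l z x y) = (\<Sum>z\<in>B. \<Sum>x\<in>C. \<Sum>y\<in>D. \<Sum>l\<in>A. f l z x y)"
proof -
  have "(\<Sum>l\<in>A. \<Sum>z\<in>B. \<Sum>x\<in>C. \<Sum>y\<in>D. f l z x y) = (\<Sum>z\<in>B. \<Sum>l\<in>A. \<Sum>x\<in>C. \<Sum>y\<in>D. f l z x y)"
    by (rule sum.swap)
  also have "\<dots> = (\<Sum>z\<in>B. \<Sum>x\<in>C. \<Sum>l\<in>A. \<Sum>y\<in>D. f l z x y)"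
    by (rule sum.cong[OF refl], rule sum.swap)
  also have "\<dots> = (\<Sum>z\<in>B. \<Sum>x\<in>C. \<Sum>y\<in>D. \<Sum>l\<in>A. f l z x y)"
    by (rule sum.cong[OF refl], rule sum.cong[OF refl], rule sum.swap)
  finally show ?thesis .
qed

lemma sum3_prod:
  fixes f g h :: "'b \<Rightarrow> 'c::comm_ring"
  shows "(\<Sum>z\<in>A. f z) * (\<Sum>x\<in>B. g x) * (\<Sum>y\<in>C. h y) = (\<Sum>z\<in>A. \<Sum>x\<in>B. \<Sum>y\<in>C. f z * g x * h y)"
  apply (subst sum_product)
  apply (simp only: sum_distrib_right)
  apply (simp only: sum_distrib_left)
  done

context
  fixes n :: nat
  assumes q: "card (UNIV :: 'a::{field,finite} set) = 2 ^ n"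
begin

lemma triple:
  fixes H :: "'a \<Rightarrow> int"
  shows "(\<Sum>l\<in>UNIV. walshH n H l * walshH n H (l * a) * walshH n H (l * b)) =
         int (2 ^ n) * (\<Sum>x\<in>UNIV. \<Sum>y\<in>UNIV. H (a * x + b * y) * H x * H y)"
proof -
  have step1: "walshH n H l * walshH n H (l * a) * walshH n H (l * b) =
     (\<Sum>z\<in>UNIV. \<Sum>x\<in>UNIV. \<Sum>y\<in>UNIV. H z * H x * H y * chi n (l * (z + a * x + b * y)))" for l
  proof -
    have "walshH n H l * walshH n H (l * a) * walshH n H (l * b) =
      (\<Sum>z\<in>UNIV. \<Sum>x\<in>UNIV. \<Sum>y\<in>UNIV. (H z * chi n (l * z)) * (H x * chi n (l * a * x)) * (H y * chi n (l * b * y)))"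
      unfolding walshH_def by (rule sum3_prod)
    also have "\<dots> = (\<Sum>z\<in>UNIV. \<Sum>x\<in>UNIV. \<Sum>y\<in>UNIV. H z * H x * H y * chi n (l * (z + a * x + b * y)))"
      using q by (intro sum.cong refl) (simp add: chi_add distrib_left mult_ac)
    finally show ?thesis .
  qed
  have "(\<Sum>l\<in>UNIV. walshH n H l * walshH n H (l * a) * walshH n H (l * b)) =
     (\<Sum>l\<in>UNIV. \<Sum>z\<in>UNIV. \<Sum>x\<in>UNIV. \<Sum>y\<in>UNIV. H z * H x * H y * chi n (l * (z + a * x + b * y)))"
    by (simp add: step1)
  also have "\<dots> = (\<Sum>z\<in>UNIV. \<Sum>x\<in>UNIV. \<Sum>y\<in>UNIV. \<Sum>l\<in>UNIV. H z * H x * H y * chi n (l * (z + a * x + b * y)))"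
    by (rule swap4)
  also have "\<dots> = (\<Sum>z\<in>UNIV. \<Sum>x\<in>UNIV. \<Sum>y\<in>UNIV. H z * H x * H y * (if z = a * x + b * y then int (2^n) else 0))"
  proof (intro sum.cong refl)
    fix z x y :: 'a
    have "(\<Sum>l\<in>UNIV. H z * H x * H y * chi n (l * (z + a * x + b * y))) =
        H z * H x * H y * (\<Sum>l\<in>UNIV. chi n ((z + a * x + b * y) * l))"
      by (simp add: sum_distrib_left mult.commute)
    also have "\<dots> = H z * H x * H y * (if z = a * x + b * y then int (2^n) else 0)"
      using char_sum[OF q, of "z + a * x + b * y"] c2_eq_iff[OF q, of z "a * x + b * y"]
      by (simp add: add.assoc)
    finally show "(\<Sum>l\<in>UNIV. H z * H x * H y * chi n (l * (z + a * x + b * y))) =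
        H z * H x * H y * (if z = a * x + b * y then int (2^n) else 0)" .
  qed
  also have "\<dots> = (\<Sum>x\<in>UNIV. \<Sum>y\<in>UNIV. \<Sum>z\<in>UNIV. H z * H x * H y * (if z = a * x + b * y then int (2^n) else 0))"
    by (subst sum.swap, rule sum.cong[OF refl], rule sum.swap)
  also have "\<dots> = (\<Sum>x\<in>UNIV. \<Sum>y\<in>UNIV. H (a * x + b * y) * H x * H y * int (2^n))"
    by (intro sum.cong refl) (simp add: if_distrib cong: if_cong)
  also have "\<dots> = int (2 ^ n) * (\<Sum>x\<in>UNIV. \<Sum>y\<in>UNIV. H (a * x + b * y) * H x * H y)"
    by (simp add: sum_distrib_left mult_ac)
  finally show ?thesis .
qed

lemma sum_if_card: "(\<Sum>s\<in>UNIV. if P s then (c::int) else 0) = c * int (card {s::'a. P s})"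
  by (simp add: sum.If_cases)

lemma tripleG:
  assumes t: "t > 0" "coprime t (2 ^ n - 1)" and b: "b ^ t \<noteq> 1"
  shows "(\<Sum>x\<in>UNIV. \<Sum>y\<in>UNIV. chi n ((a * x + b * y) ^ t) * chi n ((x::'a) ^ t) * chi n (y ^ t)) =
     int (2^n) * int (card {s::'a. (b * s + a) ^ t + s ^ t + 1 = 0}) - int (2^n)"
proof -
  define G where "G x = chi n ((x::'a) ^ t)" for x
  define c where "c s = (a + b * s) ^ t + 1 + s ^ t" for s
  have powsum: "(\<Sum>x\<in>UNIV. chi n (e * (x::'a) ^ t)) = (if e = 0 then int (2^n) else 0)" for e
    using sum_pow[OF q t, of "\<lambda>z. chi n (e * z)"] char_sum[OF q, of e] by simp
  have x0: "(\<Sum>y\<in>UNIV. G (a * 0 + b * y) * G 0 * G y) = 0"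
  proof -
    have "(\<Sum>y\<in>UNIV. G (a * 0 + b * y) * G 0 * G y) = (\<Sum>y\<in>UNIV. chi n ((b ^ t + 1) * y ^ t))"
      using q t by (intro sum.cong refl) (simp add: G_def chi_0 chi_add power_mult_distrib distrib_right zero_power)
    also have "\<dots> = 0" using powsum[of "b ^ t + 1"] c2_eq_iff[OF q, of "b^t" 1] b by simp
    finally show ?thesis .
  qed
  have xn0: "(\<Sum>y\<in>UNIV. G (a * x + b * y) * G x * G y) = (\<Sum>s\<in>UNIV. chi n (x ^ t * c s))"
    if x: "x \<noteq> 0" for x
  proof -
    have "(\<Sum>y\<in>UNIV. G (a * x + b * y) * G x * G y) = (\<Sum>s\<in>UNIV. G (a * x + b * (x * s + 0)) * G x * G (x * s + 0))"
      using sum_affine[OF q x, of "\<lambda>y. G (a * x + b * y) * G x * G y" 0] by simp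
    also have "\<dots> = (\<Sum>s\<in>UNIV. chi n (x ^ t * c s))"
    proof (intro sum.cong refl)
      fix s
      have "a * x + b * (x * s + 0) = x * (a + b * s)" by (simp add: algebra_simps)
      hence "G (a * x + b * (x * s + 0)) * G x * G (x * s + 0) =
             chi n (x ^ t * (a + b * s) ^ t) * chi n (x ^ t) * chi n (x ^ t * s ^ t)"
        by (simp add: G_def power_mult_distrib)
      also have "\<dots> = chi n (x ^ t * c s)"
        by (simp add: chi_add[OF q, symmetric] c_def distrib_left)
      finally show "G (a * x + b * (x * s + 0)) * G x * G (x * s + 0) = chi n (x ^ t * c s)" .
    qed
    finally show ?thesis .
  qed
  have "(\<Sum>x\<in>UNIV. \<Sum>y\<in>UNIV. G (a * x + b * y) * G x * G y) =
      (\<Sum>y\<in>UNIV. G (a * 0 + b * y) * G 0 * G y) + (\<Sum>x\<in>UNIV - {0}. \<Sum>y\<in>UNIV. G (a * x + b * y) * G x * G y)"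
    by (rule sum.remove) auto
  also have "\<dots> = (\<Sum>x\<in>UNIV - {0}. \<Sum>s\<in>UNIV. chi n (x ^ t * c s))"
    using x0 xn0 by simp
  also have "\<dots> = (\<Sum>s\<in>UNIV. \<Sum>x\<in>UNIV - {0}. chi n (x ^ t * c s))"
    by (rule sum.swap)
  also have "\<dots> = (\<Sum>s\<in>UNIV. (if c s = 0 then int (2^n) else 0) - 1)"
  proof (intro sum.cong refl)
    fix s
    have "(\<Sum>x\<in>UNIV. chi n (x ^ t * c s)) = chi n (0 ^ t * c s) + (\<Sum>x\<in>UNIV - {0}. chi n (x ^ t * c s))"
      by (rule sum.remove) auto
    moreover have "(\<Sum>x\<in>UNIV. chi n (x ^ t * c s)) = (if c s = 0 then int (2^n) else 0)"
      using powsum[of "c s"] by (simp add: mult.commute)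
    moreover have "chi n (0 ^ t * c s) = 1" using t by (simp add: chi_0[OF q] zero_power)
    ultimately show "(\<Sum>x\<in>UNIV - {0}. chi n (x ^ t * c s)) = (if c s = 0 then int (2^n) else 0) - 1"
      by simp
  qed
  also have "\<dots> = int (2^n) * int (card {s. c s = 0}) - int (2^n)"
    using q by (simp add: sum_subtractf sum_if_card)
  also have "{s. c s = 0} = {s::'a. (b * s + a) ^ t + s ^ t + 1 = 0}"
    by (simp add: c_def add_ac mult.commute)
  finally show ?thesis by (simp add: G_def)
qed

end
definition app :: "'a::field \<times> 'a \<Rightarrow> 'a \<Rightarrow> 'a" where
  "app g x = fst g * x + snd g"
definition Gaff :: "('a::field \<times> 'a) set" where
  "Gaff = {g. fst g \<noteq> 0}"
definition gimg :: "'a::field set \<Rightarrow> 'a \<times> 'a \<Rightarrow> 'a set" where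
  "gimg B g = app g ` B"
definition gcomp :: "'a::field \<times> 'a \<Rightarrow> 'a \<times> 'a \<Rightarrow> 'a \<times> 'a" where
  "gcomp g h = (fst g * fst h, fst g * snd h + snd g)"
definition ginv :: "'a::field \<times> 'a \<Rightarrow> 'a \<times> 'a" where
  "ginv g = (inverse (fst g), - snd g / fst g)"
definition Stab :: "'a::field set \<Rightarrow> ('a \<times> 'a) set" where
  "Stab B = {g\<in>Gaff. gimg B g = B}"
definition Pc :: "'a::field set \<Rightarrow> 'a \<Rightarrow> nat" where
  "Pc B u = card {(p, r). p \<in> B \<and> r \<in> B \<and> p \<noteq> r \<and> p + u * (r - p) \<in> B}"

lemma app_comp: "app (gcomp g h) x = app g (app h x)"
  by (simp add: app_def gcomp_def algebra_simps)

lemma img_comp: "gimg B (gcomp g h) = app g ` gimg B h"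
  by (simp add: gimg_def image_image app_comp)

lemma comp_Gp: "g \<in> Gaff \<Longrightarrow> h \<in> Gaff \<Longrightarrow> gcomp g h \<in> Gaff"
  by (simp add: Gaff_def gcomp_def)

lemma ginv_Gp: "g \<in> Gaff \<Longrightarrow> ginv g \<in> Gaff"
  by (simp add: Gaff_def ginv_def)

lemma ginv_comp1: "g \<in> Gaff \<Longrightarrow> gcomp (ginv g) (gcomp g h) = h"
  by (cases g, cases h) (simp add: Gaff_def ginv_def gcomp_def field_simps)

lemma ginv_comp2: "g \<in> Gaff \<Longrightarrow> gcomp g (gcomp (ginv g) h) = h"
  by (cases g, cases h) (simp add: Gaff_def ginv_def gcomp_def field_simps)

lemma app_ginv: "g \<in> Gaff \<Longrightarrow> app (ginv g) (app g x) = x"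
  by (cases g) (simp add: Gaff_def ginv_def app_def field_simps)

lemma img_ginv_self: "g \<in> Gaff \<Longrightarrow> app (ginv g) ` gimg B g = B"
  by (simp add: gimg_def image_image app_ginv)

lemma mem_img: "g \<in> Gaff \<Longrightarrow> (y \<in> gimg B g) = ((y - snd g) / fst g \<in> B)"
  unfolding gimg_def app_def Gaff_def
proof -
  assume "g \<in> {g. fst g \<noteq> 0}"
  hence a: "fst g \<noteq> 0" by simp
  show "(y \<in> (\<lambda>x. fst g * x + snd g) ` B) = ((y - snd g) / fst g \<in> B)"
  proof
    assume "y \<in> (\<lambda>x. fst g * x + snd g) ` B"
    then obtain x where "x \<in> B" "y = fst g * x + snd g" by blast
    thus "(y - snd g) / fst g \<in> B" using a by simp
  next
    assume h: "(y - snd g) / fst g \<in> B"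
    have "y = fst g * ((y - snd g) / fst g) + snd g" using a by simp
    thus "y \<in> (\<lambda>x. fst g * x + snd g) ` B" using h by blast
  qed
qed

lemma orbit_eq: "GA1_orbit B = gimg B ` Gaff"
proof (intro Set.set_eqI iffI)
  fix D assume "D \<in> GA1_orbit B"
  then obtain a b where ab: "a \<noteq> 0" "D = (\<lambda>x. a * x + b) ` B" by (auto simp: GA1_orbit_def)
  thus "D \<in> gimg B ` Gaff" by (intro image_eqI[of _ _ "(a, b)"]) (auto simp: gimg_def app_def Gaff_def)
next
  fix D assume "D \<in> gimg B ` Gaff"
  then obtain g where "fst g \<noteq> 0" "D = gimg B g" by (auto simp: Gaff_def)
  thus "D \<in> GA1_orbit B" unfolding GA1_orbit_def gimg_def app_def by blast
qed

lemma fiber_card: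
  assumes g0: "g0 \<in> Gaff"
  shows "card {g\<in>Gaff. gimg B g = gimg B g0} = card (Stab B)"
proof -
  have "bij_betw (gcomp g0) (Stab B) {g\<in>Gaff. gimg B g = gimg B g0}"
  proof (rule bij_betw_byWitness[where f' = "gcomp (ginv g0)"])
    show "\<forall>h\<in>Stab B. gcomp (ginv g0) (gcomp g0 h) = h" using ginv_comp1[OF g0] by simp
    show "\<forall>h\<in>{g \<in> Gaff. gimg B g = gimg B g0}. gcomp g0 (gcomp (ginv g0) h) = h"
      using ginv_comp2[OF g0] by simp
    have "gimg B (gcomp g0 h) = gimg B g0" if "h \<in> Stab B" for h
    proof -
      have "gimg B (gcomp g0 h) = app g0 ` gimg B h" by (rule img_comp)
      also have "gimg B h = B" using that by (simp add: Stab_def)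
      finally show ?thesis by (simp add: gimg_def)
    qed
    thus "gcomp g0 ` Stab B \<subseteq> {g \<in> Gaff. gimg B g = gimg B g0}"
      using g0 by (auto simp: Stab_def comp_Gp)
    show "gcomp (ginv g0) ` {g \<in> Gaff. gimg B g = gimg B g0} \<subseteq> Stab B"
      using g0 by (auto simp: Stab_def comp_Gp ginv_Gp img_comp img_ginv_self)
  qed
  thus ?thesis by (simp add: bij_betw_same_card)
qed

lemma count_blocks:
  fixes B :: "'a::{field,finite} set"
  shows "card {g\<in>Gaff. T \<subseteq> gimg B g} = card (Stab B) * card {D \<in> GA1_orbit B. T \<subseteq> D}"
proof -
  let ?I = "{D \<in> GA1_orbit B. T \<subseteq> D}"
  have eq: "{g\<in>Gaff. T \<subseteq> gimg B g} = (\<Union>D\<in>?I. {g\<in>Gaff. gimg B g = D})"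
    by (auto simp: orbit_eq)
  have "card (\<Union>D\<in>?I. {g\<in>Gaff. gimg B g = D}) = (\<Sum>D\<in>?I. card {g\<in>Gaff. gimg B g = D})"
    by (rule card_UN_disjoint) auto
  also have "\<dots> = (\<Sum>D\<in>?I. card (Stab B))"
    by (intro sum.cong refl) (auto simp: orbit_eq fiber_card)
  finally show ?thesis using eq by simp
qed

lemma Stab_pos:
  fixes B :: "'a::{field,finite} set"
  shows "card (Stab B) > 0"
proof -
  have "(1, 0) \<in> Stab B" by (simp add: Stab_def Gaff_def gimg_def app_def)
  thus ?thesis by (auto simp: card_gt_0_iff)
qed

lemma triple_count:
  fixes B :: "'a::{field,finite} set"
  assumes xy: "x \<noteq> y"
  shows "card {g\<in>Gaff. {x, y, z} \<subseteq> gimg B g} = Pc B ((z - x) / (y - x))"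
proof -
  define u where "u = (z - x) / (y - x)"
  define phi where "phi g = ((x - snd g) / fst g, (y - snd g) / fst g)" for g :: "'a \<times> 'a"
  define psi where "psi pr = ((y - x) / (snd pr - fst pr), x - (y - x) / (snd pr - fst pr) * fst pr)"
    for pr :: "'a \<times> 'a"
  have yx: "y - x \<noteq> 0" using xy by simp
  let ?S1 = "{g\<in>Gaff. {x, y, z} \<subseteq> gimg B g}"
  let ?S2 = "{(p, r). p \<in> B \<and> r \<in> B \<and> p \<noteq> r \<and> p + u * (r - p) \<in> B}"
  have zkey: "(z - snd g) / fst g = fst (phi g) + u * (snd (phi g) - fst (phi g))" if "fst g \<noteq> 0" for g
    using that yx by (simp add: phi_def u_def field_simps)
  have phipsi: "phi (psi pr) = pr" if d: "snd pr - fst pr \<noteq> 0" for pr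
  proof -
    obtain p r where pr: "pr = (p, r)" by (cases pr)
    define A where "A = (y - x) / (r - p)"
    have rp: "r - p \<noteq> 0" using d pr by simp
    have A0: "A \<noteq> 0" using rp yx by (simp add: A_def)
    have yA: "(y - x) / A = r - p" using rp yx by (simp add: A_def)
    have psi': "psi pr = (A, x - A * p)" by (simp add: psi_def pr A_def)
    have c1: "(x - (x - A * p)) / A = p" using A0 by simp
    have "(y - (x - A * p)) / A = (y - x) / A + A * p / A" by (simp add: diff_divide_distrib add_divide_distrib algebra_simps)
    also have "\<dots> = r" using yA A0 by simp
    finally have c2: "(y - (x - A * p)) / A = r" .
    show ?thesis unfolding phi_def psi' using c1 c2 pr by simp
  qed
  have "bij_betw phi ?S1 ?S2"
  proof (rule bij_betw_byWitness[where f' = psi])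
    show "\<forall>g\<in>?S1. psi (phi g) = g"
    proof
      fix g assume "g \<in> ?S1"
      hence a: "fst g \<noteq> 0" by (simp add: Gaff_def)
      show "psi (phi g) = g" using a yx
        by (cases g) (simp add: psi_def phi_def field_simps)
    qed
    show "\<forall>pr\<in>?S2. phi (psi pr) = pr"
    proof
      fix pr assume "pr \<in> ?S2"
      hence "fst pr \<noteq> snd pr" by auto
      hence d: "snd pr - fst pr \<noteq> 0" by simp
      thus "phi (psi pr) = pr" by (rule phipsi)
    qed
    show "phi ` ?S1 \<subseteq> ?S2"
    proof
      fix w assume "w \<in> phi ` ?S1"
      then obtain g where g: "g \<in> ?S1" "w = phi g" by blast
      hence a: "fst g \<noteq> 0" and gG: "g \<in> Gaff" by (auto simp: Gaff_def)
      have m: "(x - snd g) / fst g \<in> B" "(y - snd g) / fst g \<in> B" "(z - snd g) / fst g \<in> B"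
        using g(1) mem_img[OF gG] by auto
      have ne: "(x - snd g) / fst g \<noteq> (y - snd g) / fst g"
        using a xy by (simp add: divide_cancel_right)
      show "w \<in> ?S2" using m ne zkey[OF a] by (simp add: g(2) phi_def)
    qed
    show "psi ` ?S2 \<subseteq> ?S1"
    proof
      fix w assume "w \<in> psi ` ?S2"
      then obtain pr where pr: "pr \<in> ?S2" "w = psi pr" by blast
      hence d: "snd pr - fst pr \<noteq> 0" by auto
      have a: "fst w \<noteq> 0" using d yx by (simp add: pr(2) psi_def)
      hence wG: "w \<in> Gaff" by (simp add: Gaff_def)
      have ph: "phi w = pr" using phipsi[OF d] pr(2) by simp
      have "(x - snd w) / fst w \<in> B" "(y - snd w) / fst w \<in> B"
        using ph pr(1) by (auto simp: phi_def)
      moreover have "(z - snd w) / fst w \<in> B"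
        using zkey[OF a] ph pr(1) by auto
      ultimately show "w \<in> ?S1" using wG mem_img[OF wG] by auto
    qed
  qed
  hence "card ?S1 = card ?S2" by (rule bij_betw_same_card)
  thus ?thesis by (simp add: Pc_def u_def)
qed



definition ind :: "'a set \<Rightarrow> 'a \<Rightarrow> int" where
  "ind B x = (if x \<in> B then 1 else 0)"

lemma sum_if_card_gen: "(\<Sum>s\<in>(UNIV::'b::finite set). if P s then (c::int) else 0) = c * int (card {s. P s})"
  by (simp add: sum.If_cases)

lemma sum_ind: "(\<Sum>x\<in>(UNIV::'a::finite set). ind B x) = int (card B)"
  using sum_if_card_gen[of "\<lambda>x. x \<in> B" 1] by (simp add: ind_def)

lemma block_card:
  fixes B :: "'a::field set"
  assumes "D \<in> GA1_orbit B"
  shows "card D = card B"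
proof -
  obtain a b where ab: "a \<noteq> 0" "D = (\<lambda>x. a * x + b) ` B" using assms by (auto simp: GA1_orbit_def)
  have "inj_on (\<lambda>x. a * x + b) B" using ab(1) by (auto simp: inj_on_def)
  thus ?thesis using ab(2) by (simp add: card_image)
qed

lemma lam_T:
  fixes B :: "'a::{field,finite} set"
  assumes "card T = 3"
  shows "\<exists>u. u \<noteq> 0 \<and> u \<noteq> 1 \<and> card (Stab B) * card {D \<in> GA1_orbit B. T \<subseteq> D} = Pc B u"
proof -
  obtain x y z where T: "T = {x, y, z}" "x \<noteq> y" "y \<noteq> z" "x \<noteq> z" using assms card_3_iff by metis
  define u where "u = (z - x) / (y - x)"
  have "u \<noteq> 0" using T by (simp add: u_def)
  moreover have "u \<noteq> 1" using T by (simp add: u_def)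
  moreover have "card (Stab B) * card {D \<in> GA1_orbit B. T \<subseteq> D} = Pc B u"
    using count_blocks[where T=T and B=B] triple_count[OF T(2), where B=B and z=z] by (simp add: T(1) u_def)
  ultimately show ?thesis by blast
qed

lemma lam_u:
  fixes B :: "'a::{field,finite} set"
  assumes "u \<noteq> 0" "u \<noteq> 1"
  shows "card {0, 1, u} = 3" "card (Stab B) * card {D \<in> GA1_orbit B. {0, 1, u} \<subseteq> D} = Pc B u"
  using assms count_blocks[where T="{0,1,u}" and B=B] triple_count[where x=0 and y=1 and B=B and z=u] by auto

context
  fixes n :: nat
  assumes q: "card (UNIV :: 'a::{field,finite} set) = 2 ^ n"
begin

lemma Mu_eq:
  fixes B :: "'a set"
  assumes u0: "u \<noteq> 0"
  shows "(\<Sum>x\<in>UNIV. \<Sum>y\<in>UNIV. ind B ((1 + u) * x + u * y) * ind B x * ind B y) = int (Pc B u) + int (card B)"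
proof -
  define P where "P p = (fst p \<in> B \<and> snd p \<in> B \<and> (1 + u) * fst p + u * snd p \<in> B)" for p :: "'a \<times> 'a"
  have "(\<Sum>x\<in>UNIV. \<Sum>y\<in>UNIV. ind B ((1 + u) * x + u * y) * ind B x * ind B y) =
        (\<Sum>x\<in>UNIV. \<Sum>y\<in>UNIV. if P (x, y) then 1 else 0)"
    by (intro sum.cong refl) (simp add: ind_def P_def)
  also have "\<dots> = (\<Sum>p\<in>UNIV \<times> UNIV. if P p then 1 else 0)"
    by (subst sum.cartesian_product) (simp add: case_prod_beta)
  also have "\<dots> = int (card {p. P p})"
    using sum_if_card_gen[of P 1] by (simp add: UNIV_Times_UNIV)
  also have "{p. P p} = {(p, r). p \<in> B \<and> r \<in> B \<and> p \<noteq> r \<and> p + u * (r - p) \<in> B} \<union> (\<lambda>x. (x, x)) ` B"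
  proof -
    have e: "p + u * (r - p) = (1 + u) * p + u * r" for p r :: 'a
      using c2_minus[OF q, of r p] gf_two_eq_0[OF q] by (simp add: algebra_simps)
    have d: "(1 + u) * p + u * p = p" for p :: 'a
      using c2_add_self[OF q, of "u * p"] gf_two_eq_0[OF q] by (simp add: algebra_simps)
    show ?thesis using e d by (auto simp: P_def)
  qed
  also have "card (\<dots>) = Pc B u + card ((\<lambda>x. (x, x)) ` B)"
    by (subst card_Un_disjoint) (auto simp: Pc_def)
  also have "card ((\<lambda>x. (x, x)) ` B) = card B"
    by (rule card_image) (auto simp: inj_on_def)
  finally show ?thesis by simp
qed

lemma T3F_eq:
  fixes B :: "'a set"
  assumes u0: "u \<noteq> 0" and u1: "u \<noteq> 1"
  shows "(\<Sum>x\<in>UNIV. \<Sum>y\<in>UNIV. (1 - 2 * ind B ((1 + u) * x + u * y)) * (1 - 2 * ind B x) * (1 - 2 * ind B y)) =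
     int (2^n) ^ 2 - 6 * int (2^n) * int (card B) + 12 * int (card B) ^ 2
     - 8 * (\<Sum>x\<in>UNIV. \<Sum>y\<in>UNIV. ind B ((1 + u) * x + u * y) * ind B x * ind B y)"
proof -
  define f where "f = ind B"
  define k where "k = int (card B)"
  define Q where "Q = int (2^n)"
  define z where "z x y = (1 + u) * x + u * y" for x y :: 'a
  have u1': "1 + u \<noteq> 0" using c2_eq_iff[OF q, of 1 u] u1 by auto
  have sf: "(\<Sum>x\<in>(UNIV::'a set). f x) = k" by (simp add: f_def k_def sum_ind)
  have sy: "(\<Sum>y\<in>(UNIV::'a set). f (z x y)) = k" for x
    using sum_affine[OF q u0, of f "(1 + u) * x"] sf by (simp add: z_def add.commute)
  have sx: "(\<Sum>x\<in>(UNIV::'a set). f (z x y)) = k" for y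
    using sum_affine[OF q u1', of f "u * y"] sf by (simp add: z_def)
  have cardQ: "int (card (UNIV::'a set)) = Q" unfolding Q_def using q by simp
  have cQ: "(\<Sum>x\<in>(UNIV::'a set). c) = Q * c" for c using cardQ by simp
  have P0: "(\<Sum>x\<in>(UNIV::'a set). \<Sum>y\<in>(UNIV::'a set). 1::int) = Q * Q" using cQ[of 1] cQ[of Q] by simp
  have P1: "(\<Sum>x\<in>(UNIV::'a set). \<Sum>y\<in>(UNIV::'a set). f (z x y)) = Q * k" using sy cardQ by simp
  have P2: "(\<Sum>x\<in>(UNIV::'a set). \<Sum>y\<in>(UNIV::'a set). f x) = Q * k" using sf cardQ by (simp add: sum_distrib_right[symmetric] sum_distrib_left[symmetric])
  have P3: "(\<Sum>x\<in>(UNIV::'a set). \<Sum>y\<in>(UNIV::'a set). f y) = Q * k" using sf cardQ by simp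
  have P4: "(\<Sum>x\<in>(UNIV::'a set). \<Sum>y\<in>(UNIV::'a set). f (z x y) * f x) = k * k"
  proof -
    have "(\<Sum>x\<in>(UNIV::'a set). \<Sum>y\<in>(UNIV::'a set). f (z x y) * f x) = (\<Sum>x\<in>(UNIV::'a set). (\<Sum>y\<in>(UNIV::'a set). f (z x y)) * f x)"
      by (simp only: sum_distrib_right)
    also have "\<dots> = (\<Sum>x\<in>(UNIV::'a set). k * f x)" using sy by simp
    also have "\<dots> = k * k" using sf by (simp only: sum_distrib_left[symmetric])
    finally show ?thesis .
  qed
  have P5: "(\<Sum>x\<in>(UNIV::'a set). \<Sum>y\<in>(UNIV::'a set). f (z x y) * f y) = k * k"
  proof -
    have "(\<Sum>x\<in>(UNIV::'a set). \<Sum>y\<in>(UNIV::'a set). f (z x y) * f y) = (\<Sum>y\<in>(UNIV::'a set). \<Sum>x\<in>(UNIV::'a set). f (z x y) * f y)"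
      by (rule sum.swap)
    also have "\<dots> = (\<Sum>y\<in>(UNIV::'a set). (\<Sum>x\<in>(UNIV::'a set). f (z x y)) * f y)"
      by (simp only: sum_distrib_right)
    also have "\<dots> = (\<Sum>y\<in>(UNIV::'a set). k * f y)" using sx by simp
    also have "\<dots> = k * k" using sf by (simp only: sum_distrib_left[symmetric])
    finally show ?thesis .
  qed
  have P6: "(\<Sum>x\<in>(UNIV::'a set). \<Sum>y\<in>(UNIV::'a set). f x * f y) = k * k"
  proof -
    have "(\<Sum>x\<in>(UNIV::'a set). \<Sum>y\<in>(UNIV::'a set). f x * f y) = (\<Sum>x\<in>(UNIV::'a set). f x * (\<Sum>y\<in>(UNIV::'a set). f y))"
      by (simp only: sum_distrib_left)
    also have "\<dots> = (\<Sum>x\<in>(UNIV::'a set). f x * k)" using sf by simp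
    also have "\<dots> = k * k" using sf by (simp only: sum_distrib_right[symmetric])
    finally show ?thesis .
  qed
  have expand: "(1 - 2 * f (z x y)) * (1 - 2 * f x) * (1 - 2 * f y) =
      1 - 2 * f (z x y) - 2 * f x - 2 * f y + 4 * (f (z x y) * f x) + 4 * (f (z x y) * f y)
      + 4 * (f x * f y) - 8 * (f (z x y) * f x * f y)" for x y
    by (simp add: algebra_simps)
  have "(\<Sum>x\<in>(UNIV::'a set). \<Sum>y\<in>(UNIV::'a set). (1 - 2 * f (z x y)) * (1 - 2 * f x) * (1 - 2 * f y)) =
     (\<Sum>x\<in>(UNIV::'a set). \<Sum>y\<in>(UNIV::'a set). 1::int) - 2 * (\<Sum>x\<in>(UNIV::'a set). \<Sum>y\<in>(UNIV::'a set). f (z x y))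
     - 2 * (\<Sum>x\<in>(UNIV::'a set). \<Sum>y\<in>(UNIV::'a set). f x) - 2 * (\<Sum>x\<in>(UNIV::'a set). \<Sum>y\<in>(UNIV::'a set). f y)
     + 4 * (\<Sum>x\<in>(UNIV::'a set). \<Sum>y\<in>(UNIV::'a set). f (z x y) * f x) + 4 * (\<Sum>x\<in>(UNIV::'a set). \<Sum>y\<in>(UNIV::'a set). f (z x y) * f y)
     + 4 * (\<Sum>x\<in>(UNIV::'a set). \<Sum>y\<in>(UNIV::'a set). f x * f y) - 8 * (\<Sum>x\<in>(UNIV::'a set). \<Sum>y\<in>(UNIV::'a set). f (z x y) * f x * f y)"
    unfolding expand by (simp only: sum.distrib sum_subtractf sum_distrib_left)
  also have "\<dots> = Q ^ 2 - 6 * Q * k + 12 * k ^ 2 - 8 * (\<Sum>x\<in>(UNIV::'a set). \<Sum>y\<in>(UNIV::'a set). f (z x y) * f x * f y)"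
    unfolding P0 P1 P2 P3 P4 P5 P6 by (simp add: power2_eq_square algebra_simps)
  finally show ?thesis by (simp add: f_def k_def Q_def z_def)
qed

lemma walsh_F:
  fixes B :: "'a set"
  shows "walsh n (char_fun B) mu = walshH n (\<lambda>x. 1 - 2 * ind B x) mu"
  unfolding walsh_def walshH_def
proof (intro sum.cong refl)
  fix x :: 'a
  have cf: "char_fun B x = (0::'a) \<or> char_fun B x = (1::'a)" by (simp add: char_fun_def)
  have "sgn2 (char_fun B x + abs_trace n (mu * x)) = sgn2 (char_fun B x :: 'a) * sgn2 (abs_trace n (mu * x))"
    by (rule sgn2_add[OF q cf trace_01[OF q]])
  also have "sgn2 (char_fun B x :: 'a) = 1 - 2 * ind B x"
    by (simp add: sgn2_def char_fun_def ind_def)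
  finally show "sgn2 (char_fun B x + abs_trace n (mu * x)) = (1 - 2 * ind B x) * chi n (mu * x)"
    by (simp add: chi_def)
qed

lemma hyp_rhs:
  "(\<Sum>x\<in>UNIV. sgn2 (abs_trace n ((x::'a) ^ t + mu ^ d * x))) = walshH n (\<lambda>x. chi n (x ^ t)) (mu ^ d)"
  unfolding walshH_def
  by (intro sum.cong refl) (simp add: chi_def[symmetric] chi_add[OF q])

end


lemma div_eq_of_mult:
  fixes a b :: int
  assumes "b \<noteq> 0" "b * c = a"
  shows "c = a div b"
  using assms by (metis nonzero_mult_div_cancel_left)

theorem theorem10:
  fixes B :: "'a::{field,finite} set" and n k t d :: nat
  assumes q: "card (UNIV :: 'a set) = 2 ^ n"
    and Bk: "card B = k" and k3: "k \<ge> 3"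
    and td: "t > 0" "d > 0" "coprime (t * d) (2 ^ n - 1)"
    and walsh: "\<And>\<mu>. walsh n (char_fun B) \<mu> =
                     (\<Sum>x\<in>UNIV. sgn2 (abs_trace n (x ^ t + \<mu> ^ d * x)))"
  shows "is_3_design (UNIV :: 'a set) (GA1_orbit B) k \<longleftrightarrow>
         (\<exists>c. \<forall>u::'a. u \<notin> {0, 1} \<longrightarrow>
            card {x::'a. (u ^ d * x + (1 + u) ^ d) ^ t + x ^ t + 1 = 0} = c)"
proof -
  have ct: "coprime t (2 ^ n - 1)" using td(3) by simp
  have cd: "coprime d (2 ^ n - 1)" using td(3) by simp
  have ctd: "coprime (d * t) (2 ^ n - 1)" using td(3) by (simp add: mult.commute)
  have tdpos: "d * t > 0" using td by simp
  define Q where "Q = int (2 ^ n)"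
  define K where "K = int k"
  have Q0: "Q \<noteq> 0" by (simp add: Q_def)
  define FF where "FF = (\<lambda>x::'a. 1 - 2 * ind B x)"
  define G where "G = (\<lambda>x::'a. chi n (x ^ t))"
  define V where "V = walshH n G"
  define C where "C u = card {x::'a. (u ^ d * x + (1 + u) ^ d) ^ t + x ^ t + 1 = 0}" for u :: 'a
  have WF: "walshH n FF mu = V (mu ^ d)" for mu
    using walsh[of mu] walsh_F[OF q, of B mu] hyp_rhs[OF q, of t mu d]
    by (simp add: FF_def V_def G_def)
  have key: "8 * int (Pc B u) = Q ^ 2 - 6 * Q * K + 12 * K ^ 2 - 8 * K + Q - Q * int (C u)"
    if u0: "u \<noteq> 0" and u1: "u \<noteq> 1" for u :: 'a
  proof -
    define al where "al = (1 + u) ^ d"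
    define be where "be = u ^ d"
    have bet: "be ^ t \<noteq> 1"
    proof
      assume "be ^ t = 1"
      hence "u ^ (d * t) = 1 ^ (d * t)" by (simp add: be_def power_mult)
      hence "(\<lambda>x::'a. x ^ (d * t)) u = (\<lambda>x. x ^ (d * t)) 1" by simp
      hence "u = 1" using pow_inj[OF q tdpos ctd] by (rule injD[rotated])
      thus False using u1 by simp
    qed
    define T3F where "T3F = (\<Sum>x\<in>UNIV. \<Sum>y\<in>UNIV. FF ((1 + u) * x + u * y) * FF x * FF y)"
    define T3G where "T3G = (\<Sum>x\<in>UNIV. \<Sum>y\<in>UNIV. G (al * x + be * y) * G x * G y)"
    have "Q * T3F = (\<Sum>l\<in>UNIV. walshH n FF l * walshH n FF (l * (1 + u)) * walshH n FF (l * u))"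
      using triple[OF q, of FF "1 + u" u] by (simp add: T3F_def Q_def)
    also have "\<dots> = (\<Sum>l\<in>UNIV. V (l ^ d) * V (l ^ d * al) * V (l ^ d * be))"
      by (simp add: WF power_mult_distrib al_def be_def)
    also have "\<dots> = (\<Sum>l\<in>UNIV. V l * V (l * al) * V (l * be))"
      using sum_pow[OF q td(2) cd, of "\<lambda>m. V m * V (m * al) * V (m * be)"] by simp
    also have "\<dots> = Q * T3G"
      using triple[OF q, of G al be] by (simp add: T3G_def Q_def V_def)
    finally have "T3F = T3G" using Q0 by simp
    also have "T3G = Q * int (C u) - Q"
      using tripleG[OF q td(1) ct bet, of al] by (simp add: T3G_def G_def C_def Q_def al_def be_def)
    finally have e1: "T3F = Q * int (C u) - Q" .
    have e2: "T3F = Q ^ 2 - 6 * Q * K + 12 * K ^ 2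
        - 8 * (\<Sum>x\<in>UNIV. \<Sum>y\<in>UNIV. ind B ((1 + u) * x + u * y) * ind B x * ind B y)"
      using T3F_eq[OF q u0 u1, of B] by (simp add: T3F_def FF_def Q_def K_def Bk)
    have e3: "(\<Sum>x\<in>UNIV. \<Sum>y\<in>UNIV. ind B ((1 + u) * x + u * y) * ind B x * ind B y) = int (Pc B u) + K"
      using Mu_eq[OF q u0, of B] by (simp add: K_def Bk)
    show ?thesis using e1 e2 e3 by simp
  qed
  define s where "s = card (Stab B)"
  have s0: "s > 0" unfolding s_def by (rule Stab_pos)
  define lamT where "lamT T = card {D \<in> GA1_orbit B. T \<subseteq> D}" for T
  have des: "is_3_design (UNIV :: 'a set) (GA1_orbit B) k \<longleftrightarrow> (\<exists>lam. \<forall>T. card T = 3 \<longrightarrow> lamT T = lam)"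
    unfolding is_3_design_def lamT_def using block_card Bk by auto
  define X0 where "X0 = Q ^ 2 - 6 * Q * K + 12 * K ^ 2 - 8 * K + Q"
  show ?thesis
  proof
    assume "is_3_design (UNIV :: 'a set) (GA1_orbit B) k"
    then obtain lam where lam: "\<And>T. card T = 3 \<Longrightarrow> lamT T = lam" using des by blast
    have "int (C u) = (X0 - 8 * int (s * lam)) div Q" if u: "u \<notin> {0, 1}" for u
    proof -
      have u0: "u \<noteq> 0" and u1: "u \<noteq> 1" using u by auto
      have "s * lam = Pc B u" using lam_u(2)[OF u0 u1, of B] lam[OF lam_u(1)[OF u0 u1]] unfolding s_def lamT_def by metis
      hence "Q * int (C u) = X0 - 8 * int (s * lam)" using key[OF u0 u1] unfolding X0_def by simp
      thus ?thesis by (rule div_eq_of_mult[OF Q0])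
    qed
    hence "\<forall>u::'a. u \<notin> {0, 1} \<longrightarrow> C u = nat ((X0 - 8 * int (s * lam)) div Q)" by (metis nat_int)
    thus "\<exists>c. \<forall>u::'a. u \<notin> {0, 1} \<longrightarrow>
            card {x::'a. (u ^ d * x + (1 + u) ^ d) ^ t + x ^ t + 1 = 0} = c"
      unfolding C_def by blast
  next
    assume "\<exists>c. \<forall>u::'a. u \<notin> {0, 1} \<longrightarrow>
            card {x::'a. (u ^ d * x + (1 + u) ^ d) ^ t + x ^ t + 1 = 0} = c"
    then obtain c where c: "\<And>u. u \<notin> {0, 1} \<Longrightarrow> C u = c" unfolding C_def by blast
    have "int (lamT T) = (X0 - Q * int c) div (8 * int s)" if T: "card T = 3" for T
    proof -
      obtain u where u: "u \<noteq> 0" "u \<noteq> 1" "s * lamT T = Pc B u"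
        using lam_T[OF T, of B] unfolding s_def lamT_def by blast
      have "8 * int s * int (lamT T) = X0 - Q * int c"
        using key[OF u(1) u(2)] u(3) c[of u] u(1,2) unfolding X0_def
        by (simp add: mult.assoc flip: of_nat_mult)
      thus ?thesis using s0 by (intro div_eq_of_mult) simp_all
    qed
    hence "\<forall>T. card T = 3 \<longrightarrow> lamT T = nat ((X0 - Q * int c) div (8 * int s))" by (metis nat_int)
    thus "is_3_design (UNIV :: 'a set) (GA1_orbit B) k" using des by blast
  qed
qed

end
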